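(* Let $\lambda$ be Lebesgue measure on $[0,1]$ and let $T:[0,1]\to[0,1]$ be an invertible, ergodic, $\lambda$-preserving transformation which is rigid rank 1 (in the sense defined in the context), with associated numbers $n_k$ and sets $A_k$. Define $$\mathcal{R}_k=\bigcup_{i=0}^{n_k-1}T^iA_k,\qquad \hat{\mathcal{R}}_k=\bigcup_{i=0}^{n_k-1}T^i\big(A_k\cap T^{-n_k}A_k\cap T^{n_k}A_k\big),$$ $$\tilde{\mathcal{R}}_k=\bigcup_{i=0}^{n_k-1}T^i\big(A_k\cap T^{-n_k}A_k\cap T^{-2n_k}A_k\cap T^{n_k}A_k\cap T^{2n_k}A_k\big).$$ Then $$\lim_{k\to\infty}\lambda(\tilde{\mathcal{R}}_k)=\lim_{k\to\infty}\lambda(\mathcal{R}_k)=\lim_{k\to\infty}\lambda(\hat{\mathcal{R}}_k)=1.$$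
   Context: $T$ is called rigid rank 1 if there exist positive integers $n_j$ and measurable sets $A_j\subset[0,1]$ such that: (1) $\lim_{j\to\infty}\lambda\big(\bigcup_{i=0}^{n_j-1}T^iA_j\big)=1$; (2) the sets $A_j,TA_j,\dots,T^{n_j-1}A_j$ are pairwise disjoint; (3) $\lim_{j\to\infty}\lambda(T^{n_j}A_j\cap A_j)/\lambda(A_j)=1$; (4) for every $\varepsilon>0$ there exist, for each $j$, metric balls $B^{(j)}_0,\dots,B^{(j)}_{n_j-1}\subset[0,1]$ of diameter at most $\varepsilon$ such that $\lim_{j\to\infty}\sum_{i=0}^{n_j-1}\lambda(T^iA_j\setminus B^{(j)}_i)=0$. *)

theory Defs
  imports "HOL-Analysis.Analysis"
begin

definition lam01 :: "real measure" where
  "lam01 = lebesgue_on {0..1}"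

definition invertible_mp :: "(real \<Rightarrow> real) \<Rightarrow> bool" where
  "invertible_mp T \<longleftrightarrow>
     bij_betw T {0..1} {0..1} \<and>
     T \<in> lam01 \<rightarrow>\<^sub>M lam01 \<and>
     the_inv_into {0..1} T \<in> lam01 \<rightarrow>\<^sub>M lam01 \<and>
     (\<forall>S \<in> sets lam01. measure lam01 (T -` S \<inter> {0..1}) = measure lam01 S)"

definition ergodic01 :: "(real \<Rightarrow> real) \<Rightarrow> bool" where
  "ergodic01 T \<longleftrightarrow>
     (\<forall>S \<in> sets lam01. T -` S \<inter> {0..1} = S \<longrightarrow>
        measure lam01 S = 0 \<or> measure lam01 S = 1)"

definition ball01 :: "real set \<Rightarrow> bool" where
  "ball01 B \<longleftrightarrow> (\<exists>c r. c \<in> {0..1} \<and> B = ball c r \<inter> {0..1})"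

definition rigid_rank1_witness ::
    "(real \<Rightarrow> real) \<Rightarrow> (nat \<Rightarrow> nat) \<Rightarrow> (nat \<Rightarrow> real set) \<Rightarrow> bool" where
  "rigid_rank1_witness T n A \<longleftrightarrow>
     (\<forall>j. 0 < n j \<and> A j \<in> sets lam01) \<and>
     (\<lambda>j. measure lam01 (\<Union>i<n j. (T ^^ i) ` A j)) \<longlonglongrightarrow> 1 \<and>
     (\<forall>j. disjoint_family_on (\<lambda>i. (T ^^ i) ` A j) {..<n j}) \<and>
     (\<lambda>j. measure lam01 ((T ^^ n j) ` A j \<inter> A j) / measure lam01 (A j)) \<longlonglongrightarrow> 1 \<and>
     (\<forall>\<epsilon>>0. \<exists>B :: nat \<Rightarrow> nat \<Rightarrow> real set.
        (\<forall>j i. i < n j \<longrightarrow> ball01 (B j i) \<and> diameter (B j i) \<le> \<epsilon>) \<and>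
        (\<lambda>j. \<Sum>i<n j. measure lam01 ((T ^^ i) ` A j - B j i)) \<longlonglongrightarrow> 0)"

definition rigid_rank1 :: "(real \<Rightarrow> real) \<Rightarrow> bool" where
  "rigid_rank1 T \<longleftrightarrow> (\<exists>n A. rigid_rank1_witness T n A)"

end

theory Submission
  imports Defs
begin

lemma fm_lam01: "finite_measure lam01"
  unfolding lam01_def by (rule finite_measure_lebesgue_on) auto

lemma space_lam01[simp]: "space lam01 = {0..1}"
  unfolding lam01_def by simp

lemma sets_lam01_sub: "S \<in> sets lam01 \<Longrightarrow> S \<subseteq> {0..1}"
  using sets.sets_into_space[of S lam01] by simp

locale imp =
  fixes T :: "real \<Rightarrow> real"
  assumes inv: "invertible_mp T"
begin

lemma bij: "bij_betw T {0..1} {0..1}"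
  using inv unfolding invertible_mp_def by blast

lemma meas: "T \<in> lam01 \<rightarrow>\<^sub>M lam01"
  using inv unfolding invertible_mp_def by blast

lemma imeas: "the_inv_into {0..1} T \<in> lam01 \<rightarrow>\<^sub>M lam01"
  using inv unfolding invertible_mp_def by blast

lemma pres: "S \<in> sets lam01 \<Longrightarrow> measure lam01 (T -` S \<inter> {0..1}) = measure lam01 S"
  using inv unfolding invertible_mp_def by blast

lemma vim_sets: "S \<in> sets lam01 \<Longrightarrow> T -` S \<inter> {0..1} \<in> sets lam01"
  using measurable_sets[OF meas] by simp

lemma img_eq: assumes "S \<subseteq> {0..1}" shows "T ` S = the_inv_into {0..1} T -` S \<inter> {0..1}"
proof -
  have inj: "inj_on T {0..1}" and im: "T ` {0..1} = {0..1}"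
    using bij_betw_imp_inj_on[OF bij] bij_betw_imp_surj_on[OF bij] by auto
  show ?thesis
  proof
    show "T ` S \<subseteq> the_inv_into {0..1} T -` S \<inter> {0..1}"
    proof
      fix y assume "y \<in> T ` S"
      then obtain x where x: "x \<in> S" "y = T x" by blast
      then have xU: "x \<in> {0..1}" using assms by blast
      have "the_inv_into {0..1} T y = x" using the_inv_into_f_f[OF inj xU] x by simp
      moreover have "y \<in> {0..1}" using bij_betw_apply[OF bij xU] x by simp
      ultimately show "y \<in> the_inv_into {0..1} T -` S \<inter> {0..1}" using x by simp
    qed
  next
    show "the_inv_into {0..1} T -` S \<inter> {0..1} \<subseteq> T ` S"
    proof
      fix y assume y: "y \<in> the_inv_into {0..1} T -` S \<inter> {0..1}"
      then have "T (the_inv_into {0..1} T y) = y" using f_the_inv_into_f[OF inj] im by auto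
      then show "y \<in> T ` S" using y by force
    qed
  qed
qed

lemma img_sets: "S \<in> sets lam01 \<Longrightarrow> T ` S \<in> sets lam01"
  using img_eq[OF sets_lam01_sub] measurable_sets[OF imeas] by simp

lemma img_meas: assumes "S \<in> sets lam01" shows "measure lam01 (T ` S) = measure lam01 S"
proof -
  have inj: "inj_on T {0..1}" and im: "T ` {0..1} = {0..1}"
    using bij_betw_imp_inj_on[OF bij] bij_betw_imp_surj_on[OF bij] by auto
  have "T -` (T ` S) \<inter> {0..1} = S"
  proof
    show "T -` (T ` S) \<inter> {0..1} \<subseteq> S"
    proof
      fix y assume y: "y \<in> T -` (T ` S) \<inter> {0..1}"
      then obtain x where x: "x \<in> S" "T y = T x" by blast
      have "y = x" using inj_onD[OF inj x(2)] y x sets_lam01_sub[OF assms] by blast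
      then show "y \<in> S" using x by simp
    qed
    show "S \<subseteq> T -` (T ` S) \<inter> {0..1}" using sets_lam01_sub[OF assms] by blast
  qed
  then show ?thesis using pres[OF img_sets[OF assms]] by simp
qed

lemma bijp: "bij_betw (T ^^ i) {0..1} {0..1}"
  by (rule bij_betw_funpow[OF bij])

lemma injp: "inj_on (T ^^ i) {0..1}"
  using bij_betw_imp_inj_on[OF bijp] .

lemma mapsp: "x \<in> {0..1} \<Longrightarrow> (T ^^ i) x \<in> {0..1}"
  by (rule bij_betw_apply[OF bijp])

lemma imgp: "S \<in> sets lam01 \<Longrightarrow> (T ^^ i) ` S \<in> sets lam01 \<and> measure lam01 ((T ^^ i) ` S) = measure lam01 S"
proof (induction i)
  case 0 then show ?case by simp
next
  case (Suc i)
  have e: "(T ^^ Suc i) ` S = T ` ((T ^^ i) ` S)" by (simp add: image_comp)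
  from Suc have X: "(T ^^ i) ` S \<in> sets lam01"
    and mX: "measure lam01 ((T ^^ i) ` S) = measure lam01 S" by auto
  show ?case unfolding e using img_sets[OF X] img_meas[OF X] mX by (intro conjI) simp_all
qed

lemma vimp: "S \<in> sets lam01 \<Longrightarrow> (T ^^ i) -` S \<inter> {0..1} \<in> sets lam01 \<and> measure lam01 ((T ^^ i) -` S \<inter> {0..1}) = measure lam01 S"
proof (induction i)
  case 0 then show ?case using sets_lam01_sub[of S] by (simp add: Int_absorb2)
next
  case (Suc i)
  have e: "(T ^^ Suc i) -` S \<inter> {0..1} = T -` ((T ^^ i) -` S \<inter> {0..1}) \<inter> {0..1}"
    using bij_betw_apply[OF bij] unfolding funpow_Suc_right by auto
  from Suc have X: "(T ^^ i) -` S \<inter> {0..1} \<in> sets lam01"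
    and mX: "measure lam01 ((T ^^ i) -` S \<inter> {0..1}) = measure lam01 S" by auto
  have 2: "measure lam01 (T -` ((T ^^ i) -` S \<inter> {0..1}) \<inter> {0..1}) = measure lam01 S"
    using pres[OF X] mX by (rule trans)
  show ?case unfolding e by (rule conjI[OF vim_sets[OF X] 2])
qed


lemma per_k:
  fixes A :: "real set" and N :: nat and e :: real
  assumes A: "A \<in> sets lam01"
    and disj: "disjoint_family_on (\<lambda>i. (T ^^ i) ` A) {..<N}"
    and e_def: "e = measure lam01 A - measure lam01 ((T ^^ N) ` A \<inter> A)"
  shows "measure lam01 (\<Union>i<N. (T ^^ i) ` A) = N * measure lam01 A"
    and "N * measure lam01 A - 4 * (N * e) \<le> measure lam01 (\<Union>i<N. (T ^^ i) `
            (A \<inter> ((T ^^ N) -` A \<inter> {0..1}) \<inter> ((T ^^ (2 * N)) -` A \<inter> {0..1})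
                 \<inter> (T ^^ N) ` A \<inter> (T ^^ (2 * N)) ` A))"
    and "measure lam01 (\<Union>i<N. (T ^^ i) `
            (A \<inter> ((T ^^ N) -` A \<inter> {0..1}) \<inter> ((T ^^ (2 * N)) -` A \<inter> {0..1})
                 \<inter> (T ^^ N) ` A \<inter> (T ^^ (2 * N)) ` A)) \<le> N * measure lam01 A"
    and "N * measure lam01 A - 4 * (N * e) \<le> measure lam01 (\<Union>i<N. (T ^^ i) `
            (A \<inter> ((T ^^ N) -` A \<inter> {0..1}) \<inter> (T ^^ N) ` A))"
    and "measure lam01 (\<Union>i<N. (T ^^ i) `
            (A \<inter> ((T ^^ N) -` A \<inter> {0..1}) \<inter> (T ^^ N) ` A)) \<le> N * measure lam01 A"
proof -
  interpret M: finite_measure lam01 by (rule fm_lam01)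
  define U :: "real set" where "U = {0..1}"
  define f where "f = T ^^ N"
  define P1 where "P1 = f -` A \<inter> U"
  define P2 where "P2 = (T ^^ (2 * N)) -` A \<inter> U"
  define I1 where "I1 = f ` A"
  define I2 where "I2 = (T ^^ (2 * N)) ` A"
  define C where "C = A \<inter> P1 \<inter> P2 \<inter> I1 \<inter> I2"
  define D where "D = A \<inter> P1 \<inter> I1"
  have AU: "A \<subseteq> U" using sets_lam01_sub[OF A] U_def by simp
  have ff: "T ^^ (2 * N) = f \<circ> f" unfolding f_def by (simp add: mult_2 funpow_add)
  have fU: "x \<in> U \<Longrightarrow> f x \<in> U" for x unfolding U_def f_def by (rule mapsp)
  have finj: "inj_on f U" unfolding U_def f_def by (rule injp)
  have P1s: "P1 \<in> sets lam01" unfolding P1_def U_def f_def using vimp[OF A] by blast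
  have P2s: "P2 \<in> sets lam01" unfolding P2_def U_def using vimp[OF A] by blast
  have I1s: "I1 \<in> sets lam01" unfolding I1_def f_def using imgp[OF A] by blast
  have I2s: "I2 \<in> sets lam01" unfolding I2_def using imgp[OF A] by blast
  have P2e: "P2 = f -` P1 \<inter> U" unfolding P2_def P1_def ff using fU by auto
  have I2e: "I2 = f ` I1" unfolding I2_def I1_def ff by (simp add: image_comp)
  have AP1s: "A \<inter> P1 \<in> sets lam01" using A P1s by auto
  have "f ` (A \<inter> P1) = f ` A \<inter> A" unfolding P1_def using AU by auto
  then have mAP1: "measure lam01 (A \<inter> P1) = measure lam01 (f ` A \<inter> A)"
    using imgp[OF AP1s, of N] unfolding f_def by simp
  have e1: "measure lam01 (A - P1) = e"
    using M.finite_measure_Diff'[OF A P1s] mAP1 unfolding e_def f_def by simp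
  have AmP1: "A - P1 \<in> sets lam01" using A P1s by auto
  have "P1 - P2 = f -` (A - P1) \<inter> U" unfolding P2e P1_def using fU by auto
  then have e2: "measure lam01 (P1 - P2) = e" using vimp[OF AmP1, of N] e1 unfolding f_def U_def by simp
  have e3: "measure lam01 (A - I1) = e"
    using M.finite_measure_Diff'[OF A I1s] unfolding e_def f_def I1_def by (simp add: Int_commute)
  have AmI1: "A - I1 \<in> sets lam01" using A I1s by auto
  have I1U: "I1 \<subseteq> U" unfolding I1_def using AU fU by auto
  have "I1 - I2 = f ` (A - I1)" unfolding I2e I1_def
    by (rule inj_on_image_set_diff[OF finj, symmetric]) (use AU fU in auto)
  then have e4: "measure lam01 (I1 - I2) = e" using imgp[OF AmI1, of N] e3 unfolding f_def by simp
  have Cs: "C \<in> sets lam01" unfolding C_def using A P1s P2s I1s I2s by auto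
  have Ds: "D \<in> sets lam01" unfolding D_def using A P1s I1s by auto
  have "A - C \<subseteq> (A - P1) \<union> (P1 - P2) \<union> (A - I1) \<union> (I1 - I2)" unfolding C_def by auto
  then have "measure lam01 (A - C) \<le> measure lam01 ((A - P1) \<union> (P1 - P2) \<union> (A - I1) \<union> (I1 - I2))"
    by (intro M.finite_measure_mono) (use A P1s P2s I1s I2s in auto)
  also have "\<dots> \<le> measure lam01 ((A - P1) \<union> (P1 - P2) \<union> (A - I1)) + measure lam01 (I1 - I2)"
    by (rule measure_Un_le) (use A P1s P2s I1s I2s in auto)
  also have "\<dots> \<le> measure lam01 ((A - P1) \<union> (P1 - P2)) + measure lam01 (A - I1) + measure lam01 (I1 - I2)"
    using measure_Un_le[of "(A - P1) \<union> (P1 - P2)" lam01 "A - I1"] A P1s P2s I1s I2s by auto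
  also have "\<dots> \<le> measure lam01 (A - P1) + measure lam01 (P1 - P2) + measure lam01 (A - I1) + measure lam01 (I1 - I2)"
    using measure_Un_le[of "A - P1" lam01 "P1 - P2"] A P1s P2s I1s I2s by auto
  finally have AC: "measure lam01 (A - C) \<le> 4 * e" using e1 e2 e3 e4 by simp
  have "A - D \<subseteq> (A - P1) \<union> (A - I1)" unfolding D_def by auto
  then have "measure lam01 (A - D) \<le> measure lam01 ((A - P1) \<union> (A - I1))"
    by (intro M.finite_measure_mono) (use A P1s I1s in auto)
  also have "\<dots> \<le> measure lam01 (A - P1) + measure lam01 (A - I1)"
    by (rule measure_Un_le) (use A P1s I1s in auto)
  finally have AD: "measure lam01 (A - D) \<le> 2 * e" using e1 e3 by simp
  have e0: "e \<ge> 0" unfolding e_def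
    using M.finite_measure_mono[OF _ A, of "(T ^^ N) ` A \<inter> A"] by auto
  have "C \<subseteq> A" unfolding C_def by blast
  then have mC: "measure lam01 C = measure lam01 A - measure lam01 (A - C)"
    using M.finite_measure_Diff[OF A Cs] by simp
  have "D \<subseteq> A" unfolding D_def by blast
  then have mD: "measure lam01 D = measure lam01 A - measure lam01 (A - D)"
    using M.finite_measure_Diff[OF A Ds] by simp
  have tower: "measure lam01 (\<Union>i<N. (T ^^ i) ` Q) = N * measure lam01 Q"
    if Q: "Q \<in> sets lam01" "Q \<subseteq> A" for Q
  proof -
    have "measure lam01 (\<Union>i<N. (T ^^ i) ` Q) = (\<Sum>i<N. measure lam01 ((T ^^ i) ` Q))"
    proof (rule M.finite_measure_finite_Union)
      show "(\<lambda>i. (T ^^ i) ` Q) ` {..<N} \<subseteq> sets lam01" using imgp[OF Q(1)] by auto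
      show "disjoint_family_on (\<lambda>i. (T ^^ i) ` Q) {..<N}"
        using disj Q(2) unfolding disjoint_family_on_def by blast
    qed simp
    also have "\<dots> = N * measure lam01 Q" using imgp[OF Q(1)] by simp
    finally show ?thesis .
  qed
  show "measure lam01 (\<Union>i<N. (T ^^ i) ` A) = N * measure lam01 A" using tower[OF A] by simp
  have CC: "A \<inter> ((T ^^ N) -` A \<inter> {0..1}) \<inter> ((T ^^ (2 * N)) -` A \<inter> {0..1})
                 \<inter> (T ^^ N) ` A \<inter> (T ^^ (2 * N)) ` A = C"
    unfolding C_def P1_def P2_def I1_def I2_def f_def U_def by blast
  have DD: "A \<inter> ((T ^^ N) -` A \<inter> {0..1}) \<inter> (T ^^ N) ` A = D"
    unfolding D_def P1_def I1_def f_def U_def by blast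
  have tC: "measure lam01 (\<Union>i<N. (T ^^ i) ` C) = N * measure lam01 C"
    using tower[OF Cs] unfolding C_def by blast
  have tD: "measure lam01 (\<Union>i<N. (T ^^ i) ` D) = N * measure lam01 D"
    using tower[OF Ds] unfolding D_def by blast
  have NN: "real N \<ge> 0" by simp
  have "measure lam01 A - 4 * e \<le> measure lam01 C" using mC AC by simp
  from mult_left_mono[OF this NN]
  show "N * measure lam01 A - 4 * (N * e) \<le> measure lam01 (\<Union>i<N. (T ^^ i) `
            (A \<inter> ((T ^^ N) -` A \<inter> {0..1}) \<inter> ((T ^^ (2 * N)) -` A \<inter> {0..1})
                 \<inter> (T ^^ N) ` A \<inter> (T ^^ (2 * N)) ` A))"
    unfolding CC tC by (simp add: algebra_simps)
  have "measure lam01 C \<le> measure lam01 A" using mC by simp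
  from mult_left_mono[OF this NN]
  show "measure lam01 (\<Union>i<N. (T ^^ i) `
            (A \<inter> ((T ^^ N) -` A \<inter> {0..1}) \<inter> ((T ^^ (2 * N)) -` A \<inter> {0..1})
                 \<inter> (T ^^ N) ` A \<inter> (T ^^ (2 * N)) ` A)) \<le> N * measure lam01 A"
    unfolding CC tC by simp
  have "measure lam01 A - 4 * e \<le> measure lam01 D" using mD AD e0 by simp
  from mult_left_mono[OF this NN]
  show "N * measure lam01 A - 4 * (N * e) \<le> measure lam01 (\<Union>i<N. (T ^^ i) `
            (A \<inter> ((T ^^ N) -` A \<inter> {0..1}) \<inter> (T ^^ N) ` A))"
    unfolding DD tD by (simp add: algebra_simps)
  have "measure lam01 D \<le> measure lam01 A" using mD by simp
  from mult_left_mono[OF this NN]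
  show "measure lam01 (\<Union>i<N. (T ^^ i) `
            (A \<inter> ((T ^^ N) -` A \<inter> {0..1}) \<inter> (T ^^ N) ` A)) \<le> N * measure lam01 A"
    unfolding DD tD by simp
qed


lemma main:
  fixes n :: "nat \<Rightarrow> nat" and A :: "nat \<Rightarrow> real set"
  assumes W: "rigid_rank1_witness T n A"
  shows "(\<lambda>k. measure lam01 (\<Union>i<n k. (T ^^ i) `
            (A k \<inter> ((T ^^ n k) -` A k \<inter> {0..1}) \<inter> ((T ^^ (2 * n k)) -` A k \<inter> {0..1})
                 \<inter> (T ^^ n k) ` A k \<inter> (T ^^ (2 * n k)) ` A k))) \<longlonglongrightarrow> 1 \<and>
         (\<lambda>k. measure lam01 (\<Union>i<n k. (T ^^ i) ` A k)) \<longlonglongrightarrow> 1 \<and>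
         (\<lambda>k. measure lam01 (\<Union>i<n k. (T ^^ i) `
            (A k \<inter> ((T ^^ n k) -` A k \<inter> {0..1}) \<inter> (T ^^ n k) ` A k))) \<longlonglongrightarrow> 1"
proof -
  interpret M: finite_measure lam01 by (rule fm_lam01)
  have As: "\<And>k. A k \<in> sets lam01" and dj: "\<And>k. disjoint_family_on (\<lambda>i. (T ^^ i) ` A k) {..<n k}"
    and c1: "(\<lambda>k. measure lam01 (\<Union>i<n k. (T ^^ i) ` A k)) \<longlonglongrightarrow> 1"
    and c2: "(\<lambda>j. measure lam01 ((T ^^ n j) ` A j \<inter> A j) / measure lam01 (A j)) \<longlonglongrightarrow> 1"
  proof -
    note W' = W[unfolded rigid_rank1_witness_def]
    show "\<And>k. A k \<in> sets lam01" using W'[THEN conjunct1] by simp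
    show "\<And>k. disjoint_family_on (\<lambda>i. (T ^^ i) ` A k) {..<n k}"
      using W'[THEN conjunct2, THEN conjunct2, THEN conjunct1] by simp
    show "(\<lambda>k. measure lam01 (\<Union>i<n k. (T ^^ i) ` A k)) \<longlonglongrightarrow> 1"
      by (rule W'[THEN conjunct2, THEN conjunct1])
    show "(\<lambda>j. measure lam01 ((T ^^ n j) ` A j \<inter> A j) / measure lam01 (A j)) \<longlonglongrightarrow> 1"
      by (rule W'[THEN conjunct2, THEN conjunct2, THEN conjunct2, THEN conjunct1])
  qed
  define a where "a k = measure lam01 (A k)" for k
  define m where "m k = measure lam01 ((T ^^ n k) ` A k \<inter> A k)" for k
  define e where "e k = a k - m k" for k
  have eq: "e k = measure lam01 (A k) - measure lam01 ((T ^^ n k) ` A k \<inter> A k)" for k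
    by (simp add: e_def a_def m_def)
  have na: "(\<lambda>k. real (n k) * a k) \<longlonglongrightarrow> 1"
    using c1 per_k(1)[OF As dj eq] unfolding a_def by simp
  have ee: "real (n k) * e k = (real (n k) * a k) * (1 - m k / a k)" for k
  proof (cases "a k = 0")
    case True
    have "m k \<le> measure lam01 ((T ^^ n k) ` A k)" unfolding m_def
      by (rule M.finite_measure_mono) (use imgp[OF As] in auto)
    also have "\<dots> = a k" unfolding a_def using imgp[OF As] by blast
    finally have "m k = 0" using True m_def by (simp add: antisym)
    then show ?thesis using True e_def by simp
  next
    case False
    then show ?thesis unfolding e_def by (simp add: field_simps)
  qed
  have r0: "(\<lambda>k. 1 - m k / a k) \<longlonglongrightarrow> 0"
    using tendsto_diff[OF tendsto_const[of 1] c2] unfolding m_def a_def by simp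
  have ne: "(\<lambda>k. real (n k) * e k) \<longlonglongrightarrow> 0"
    unfolding ee using tendsto_mult[OF na r0] by simp
  have lo: "(\<lambda>k. real (n k) * a k - 4 * (real (n k) * e k)) \<longlonglongrightarrow> 1"
    using tendsto_diff[OF na tendsto_mult[OF tendsto_const[of 4] ne]] by simp
  show ?thesis
  proof (intro conjI)
    show "(\<lambda>k. measure lam01 (\<Union>i<n k. (T ^^ i) ` A k)) \<longlonglongrightarrow> 1" by (rule c1)
    show "(\<lambda>k. measure lam01 (\<Union>i<n k. (T ^^ i) `
            (A k \<inter> ((T ^^ n k) -` A k \<inter> {0..1}) \<inter> ((T ^^ (2 * n k)) -` A k \<inter> {0..1})
                 \<inter> (T ^^ n k) ` A k \<inter> (T ^^ (2 * n k)) ` A k))) \<longlonglongrightarrow> 1"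
    proof (rule tendsto_sandwich[OF _ _ lo na])
      show "\<forall>\<^sub>F k in sequentially. real (n k) * a k - 4 * (real (n k) * e k) \<le> measure lam01 (\<Union>i<n k. (T ^^ i) `
            (A k \<inter> ((T ^^ n k) -` A k \<inter> {0..1}) \<inter> ((T ^^ (2 * n k)) -` A k \<inter> {0..1})
                 \<inter> (T ^^ n k) ` A k \<inter> (T ^^ (2 * n k)) ` A k))"
        unfolding a_def by (intro always_eventually allI) (rule per_k(2)[OF As dj eq])
      show "\<forall>\<^sub>F k in sequentially. measure lam01 (\<Union>i<n k. (T ^^ i) `
            (A k \<inter> ((T ^^ n k) -` A k \<inter> {0..1}) \<inter> ((T ^^ (2 * n k)) -` A k \<inter> {0..1})
                 \<inter> (T ^^ n k) ` A k \<inter> (T ^^ (2 * n k)) ` A k)) \<le> real (n k) * a k"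
        unfolding a_def by (intro always_eventually allI) (rule per_k(3)[OF As dj eq])
    qed
    show "(\<lambda>k. measure lam01 (\<Union>i<n k. (T ^^ i) `
            (A k \<inter> ((T ^^ n k) -` A k \<inter> {0..1}) \<inter> (T ^^ n k) ` A k))) \<longlonglongrightarrow> 1"
    proof (rule tendsto_sandwich[OF _ _ lo na])
      show "\<forall>\<^sub>F k in sequentially. real (n k) * a k - 4 * (real (n k) * e k) \<le> measure lam01 (\<Union>i<n k. (T ^^ i) `
            (A k \<inter> ((T ^^ n k) -` A k \<inter> {0..1}) \<inter> (T ^^ n k) ` A k))"
        unfolding a_def by (intro always_eventually allI) (rule per_k(4)[OF As dj eq])
      show "\<forall>\<^sub>F k in sequentially. measure lam01 (\<Union>i<n k. (T ^^ i) `
            (A k \<inter> ((T ^^ n k) -` A k \<inter> {0..1}) \<inter> (T ^^ n k) ` A k)) \<le> real (n k) * a k"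
        unfolding a_def by (intro always_eventually allI) (rule per_k(5)[OF As dj eq])
    qed
  qed
qed

end

theorem mainTheorem1:
  fixes T :: "real \<Rightarrow> real" and n :: "nat \<Rightarrow> nat" and A :: "nat \<Rightarrow> real set"
  assumes "invertible_mp T" and "ergodic01 T"
    and "rigid_rank1_witness T n A"
  shows "(\<lambda>k. measure lam01 (\<Union>i<n k. (T ^^ i) `
            (A k \<inter> ((T ^^ n k) -` A k \<inter> {0..1}) \<inter> ((T ^^ (2 * n k)) -` A k \<inter> {0..1})
                 \<inter> (T ^^ n k) ` A k \<inter> (T ^^ (2 * n k)) ` A k))) \<longlonglongrightarrow> 1 \<and>
         (\<lambda>k. measure lam01 (\<Union>i<n k. (T ^^ i) ` A k)) \<longlonglongrightarrow> 1 \<and>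
         (\<lambda>k. measure lam01 (\<Union>i<n k. (T ^^ i) `
            (A k \<inter> ((T ^^ n k) -` A k \<inter> {0..1}) \<inter> (T ^^ n k) ` A k))) \<longlonglongrightarrow> 1"
  using imp.main[OF imp.intro[OF assms(1)] assms(3)] .

end
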